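(* Let $m/n\in(0,1/2)$ with $\mathrm{LFP}(m/n)=u/v$ and $\mathrm{RFP}(m/n)=p/q$. Then: (a) $\#\mathcal O_{m/n}[m,n-1]=q=n-v$ and $\#\mathcal O_{m/n}[m-1,0]=n-q=v$; (b) $\#(\mathcal O_{m/n}[m,n-1]\cap[1,m])=\#(\mathcal O_{m/n}[m,n-1]\cap[n-m,n-1])=p=m-u$; (c) $\#(\mathcal O_{m/n}[m-1,0]\cap[1,m])=\#(\mathcal O_{m/n}[m-1,0]\cap[n-m,n-1])=m-p=u$.
   Context: All rationals are written in lowest terms. The Farey sequence $\mathcal F_n$ of order $n$ is the increasing sequence of rationals in $[0,1/2]$ with denominator at most $n$. For $h/k\in(0,1/2)$, the left and right Farey parents $\mathrm{LFP}(h/k)$, $\mathrm{RFP}(h/k)$ are the elements of $\mathcal F_k$ immediately preceding and following $h/k$. Let $+_n$ denote addition modulo $n$ on $\mathbb Z_n=\{0,\dots,n-1\}$. For $r,s\in\mathbb Z_n$, $\mathcal O_{m/n}[r,s]=\{r+_njm\colon 0\le j\le k\}$ where $k\ge0$ is least with $r+_nkm=s$. For integers $r\le s$, $[r,s]=\{r,r+1,\dots,s\}$. *)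

theory Defs
  imports Main "HOL.Rat"
begin

definition farey :: "int \<Rightarrow> rat set" where
  "farey n = {x. 0 \<le> x \<and> x \<le> 1/2 \<and> snd (quotient_of x) \<le> n}"

definition LFP :: "rat \<Rightarrow> rat" where
  "LFP x = Max {y \<in> farey (snd (quotient_of x)). y < x}"

definition RFP :: "rat \<Rightarrow> rat" where
  "RFP x = Min {y \<in> farey (snd (quotient_of x)). x < y}"

definition orbit :: "nat \<Rightarrow> nat \<Rightarrow> nat \<Rightarrow> nat \<Rightarrow> nat set" where
  "orbit m n r s =
     (let k = (LEAST k. (r + k * m) mod n = s) in {(r + j * m) mod n | j. j \<le> k})"

end

theory Submission
  imports Defs "HOL-Number_Theory.Cong"
begin


lemma orb_inj:
  fixes m n r j j' :: nat
  assumes "coprime m n" "j < n" "j' < n" "(r + j*m) mod n = (r + j'*m) mod n"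
  shows "j = j'"
proof -
  have "[r + j*m = r + j'*m] (mod n)" using assms(4) by (simp add: cong_def)
  hence "[j*m = j'*m] (mod n)" by (simp only: cong_add_lcancel_nat)
  hence "[j = j'] (mod n)" by (simp only: cong_mult_rcancel_nat[OF assms(1)])
  thus ?thesis by (rule cong_less_modulus_unique_nat[OF _ assms(2,3)])
qed

lemma orb_inj_on:
  fixes m n r :: nat
  assumes "coprime m n"
  shows "inj_on (\<lambda>j. (r + j*m) mod n) {..<n}"
proof (rule inj_onI)
  fix x y assume "x \<in> {..<n}" "y \<in> {..<n}" "(r + x*m) mod n = (r + y*m) mod n"
  then show "x = y" using orb_inj[OF assms, of x y r] by simp
qed

lemma orbit_eq:
  fixes m n r s K :: nat
  assumes "coprime m n" "K < n" "(r + K*m) mod n = s"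
  shows "orbit m n r s = (\<lambda>j. (r + j*m) mod n) ` {..<Suc K}"
proof -
  have "(LEAST k. (r + k * m) mod n = s) = K"
  proof (rule Least_equality)
    show "(r + K * m) mod n = s" by fact
  next
    fix y assume y: "(r + y * m) mod n = s"
    show "K \<le> y"
    proof (rule ccontr)
      assume "\<not> K \<le> y"
      hence "y < K" by simp
      with y assms have "y = K" using orb_inj[of m n y K r] by auto
      thus False using \<open>y < K\<close> by simp
    qed
  qed
  thus ?thesis unfolding orbit_def Let_def by auto
qed

lemma card_filter_sum:
  fixes P :: "nat \<Rightarrow> bool"
  shows "card {j\<in>{..<N}. P j} = (\<Sum>j<N. if P j then 1 else 0)"
proof -
  have "card {j\<in>{..<N}. P j} = (\<Sum>j\<in>{j\<in>{..<N}. P j}. 1)" by (rule card_eq_sum)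
  also have "\<dots> = (\<Sum>j<N. if P j then 1 else 0)" by (rule sum.inter_filter) simp
  finally show ?thesis .
qed

lemma card_inter_sum:
  fixes f :: "nat \<Rightarrow> nat"
  assumes "inj_on f {..<N}"
  shows "card (f ` {..<N} \<inter> S) = (\<Sum>j<N. if f j \<in> S then 1 else 0)"
proof -
  have e: "f ` {..<N} \<inter> S = f ` {j\<in>{..<N}. f j \<in> S}" by auto
  have i: "inj_on f {j\<in>{..<N}. f j \<in> S}" using assms by (rule inj_on_subset) auto
  have "card (f ` {..<N} \<inter> S) = card {j\<in>{..<N}. f j \<in> S}"
    unfolding e by (rule card_image[OF i])
  also have "\<dots> = (\<Sum>j<N. if f j \<in> S then 1 else 0)"
    by (rule card_filter_sum)
  finally show ?thesis .
qed

lemma div_step: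
  fixes c m n :: nat
  assumes "m < n"
  shows "(c + m) div n = c div n + (if c mod n \<ge> n - m then 1 else 0)"
proof -
  have c: "n * (c div n) + c mod n = c" by simp
  have r: "c mod n < n" using assms by simp
  show ?thesis
  proof (cases "c mod n \<ge> n - m")
    case True
    have "(c + m) div n = Suc (c div n)"
    proof (rule div_nat_eqI)
      have "n \<le> c mod n + m" using True assms by linarith
      then show "n * Suc (c div n) \<le> c + m" using c by (subst mult_Suc_right) linarith
      have "n * Suc (Suc (c div n)) = n + n + n * (c div n)" by simp
      then show "c + m < n * Suc (Suc (c div n))" using c True r assms by linarith
    qed
    thus ?thesis using True by simp
  next
    case False
    have "(c + m) div n = c div n"
    proof (rule div_nat_eqI)
      show "n * (c div n) \<le> c + m" using c by linarith
      have "c mod n + m < n" using False by simp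
      moreover have "n * Suc (c div n) = n + n * (c div n)" by simp
      ultimately show "c + m < n * Suc (c div n)" using c by linarith
    qed
    thus ?thesis using False by simp
  qed
qed

lemma wraps:
  fixes c m n b :: nat
  assumes "m < n"
  shows "(\<Sum>j<b. if (c + j*m) mod n \<ge> n - m then 1 else 0) = (c + b*m) div n - c div n"
proof (induction b)
  case 0 thus ?case by simp
next
  case (Suc b)
  have "(c + Suc b * m) div n = (c + b*m) div n + (if (c + b*m) mod n \<ge> n - m then 1 else 0)"
    using div_step[OF assms, of "c + b*m"] by (simp add: algebra_simps)
  moreover have "c div n \<le> (c + b*m) div n" by (simp add: div_le_mono)
  ultimately show ?case using Suc by simp
qed

lemma low_shift:
  fixes x m n :: nat
  assumes "m < n"
  shows "((x + m) mod n < m) = (x mod n \<ge> n - m)"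
proof -
  have e: "(x + m) mod n = (x mod n + m) mod n" by (simp add: mod_add_left_eq)
  have r: "x mod n < n" using assms by simp
  show ?thesis
  proof (cases "x mod n \<ge> n - m")
    case True
    have "(x mod n + m) mod n = (x mod n + m - n) mod n"
      using True r assms by (simp add: le_mod_geq)
    also have "\<dots> = x mod n + m - n"
    proof -
      have "x mod n + m - n < n" using r assms by linarith
      thus ?thesis by simp
    qed
    finally have "(x + m) mod n = x mod n + m - n" using e by simp
    moreover have "x mod n + m - n < m"
    proof -
      have "\<And>t. t < n \<Longrightarrow> m < n \<Longrightarrow> n - m \<le> t \<Longrightarrow> t + m - n < m" by arith
      thus ?thesis using r assms True by blast
    qed
    ultimately have "(x + m) mod n < m" by simp
    thus ?thesis using True by simp
  next
    case False
    hence "(x mod n + m) mod n = x mod n + m" by simp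
    thus ?thesis using e False by simp
  qed
qed

lemma lows:
  fixes c m n b :: nat
  assumes "m < n"
  shows "(\<Sum>j<Suc b. if (c + j*m) mod n < m then 1 else 0) =
     (if c mod n < m then 1 else 0) + ((c + b*m) div n - c div n)"
proof -
  have "(\<Sum>j<Suc b. if (c + j*m) mod n < m then 1 else (0::nat)) =
     (if c mod n < m then 1 else 0) + (\<Sum>j<b. if (c + Suc j*m) mod n < m then 1 else 0)"
    by (subst sum.lessThan_Suc_shift) simp
  also have "(\<Sum>j<b. if (c + Suc j*m) mod n < m then 1 else (0::nat)) =
      (\<Sum>j<b. if (c + j*m) mod n \<ge> n - m then 1 else 0)"
  proof (rule sum.cong[OF refl])
    fix j
    have e: "c + Suc j * m = (c + j*m) + m" by simp
    show "(if (c + Suc j*m) mod n < m then 1 else (0::nat)) = (if (c + j*m) mod n \<ge> n - m then 1 else 0)"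
      by (simp only: e low_shift[OF assms, of "c+j*m"])
  qed
  finally show ?thesis using wraps[OF assms] by simp
qed

lemma count_eq:
  fixes f :: "nat \<Rightarrow> nat"
  assumes "inj_on f {..<n}" "N \<le> n" "j0 < n"
  shows "(\<Sum>j<N. if f j = f j0 then 1 else 0) = (if j0 < N then (1::nat) else 0)"
proof -
  have "{j\<in>{..<N}. f j = f j0} = (if j0 < N then {j0} else {})"
  proof (cases "j0 < N")
    case True
    have "j = j0" if "j < N" "f j = f j0" for j
      using inj_onD[OF assms(1) that(2)] that assms by simp
    thus ?thesis using True by auto
  next
    case False
    have "f j \<noteq> f j0" if "j < N" for j
      using inj_onD[OF assms(1)] that assms False by fastforce
    thus ?thesis using False by auto
  qed
  hence "card {j\<in>{..<N}. f j = f j0} = (if j0 < N then 1 else 0)" by simp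
  thus ?thesis by (simp only: card_filter_sum)
qed



lemma quot_eq: "b > 0 \<Longrightarrow> coprime a b \<Longrightarrow> quotient_of (of_int a / of_int b) = (a,b)"
  by (metis Fract_of_int_quotient quotient_of_Fract normalize_stable)

lemma rat_less_iff:
  fixes a b c d :: int
  assumes "0 < b" "0 < d"
  shows "(of_int a / of_int b < (of_int c / of_int d :: rat)) = (a*d < c*b)"
proof -
  have "(of_int a / of_int b < (of_int c / of_int d :: rat)) = (of_int a * of_int d < (of_int c * of_int b :: rat))"
    using assms by (simp add: field_simps)
  also have "\<dots> = (a*d < c*b)" by (metis of_int_less_iff of_int_mult)
  finally show ?thesis .
qed

lemma rat_le_iff:
  fixes a b c d :: int
  assumes "0 < b" "0 < d"
  shows "(of_int a / of_int b \<le> (of_int c / of_int d :: rat)) = (a*d \<le> c*b)"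
  using rat_less_iff[OF assms(2,1), of c a] by (simp add: not_less[symmetric])

lemma farey_elem:
  assumes "y \<in> farey n"
  obtains a b where "quotient_of y = (a,b)" "y = of_int a / of_int b" "0 < b" "b \<le> n" "0 \<le> a" "2*a \<le> b"
proof -
  obtain a b where q: "quotient_of y = (a,b)" by (cases "quotient_of y") auto
  have y: "y = of_int a / of_int b" using quotient_of_div[OF q] .
  have b: "0 < b" using quotient_of_denom_pos[OF q] .
  have bn: "b \<le> n" using assms q unfolding farey_def by auto
  have "0 \<le> y" "y \<le> 1/2" using assms unfolding farey_def by auto
  hence "of_int 0 / of_int 1 \<le> (of_int a / of_int b :: rat)" "of_int a / of_int b \<le> (of_int 1 / of_int 2 :: rat)"
    using y by auto
  hence "0 \<le> a" "2*a \<le> b" using rat_le_iff[of 1 b 0 a] rat_le_iff[of b 2 a 1] b by (auto simp: ac_simps)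
  thus ?thesis using that q y b bn by auto
qed

lemma farey_finite: "finite (farey n)"
proof -
  have "farey n \<subseteq> (\<lambda>(a,b). of_int a / of_int b) ` ({0..n} \<times> {1..n})"
  proof
    fix y assume "y \<in> farey n"
    then obtain a b where "y = of_int a / of_int b" "0 < b" "b \<le> n" "0 \<le> a" "2*a \<le> b"
      by (rule farey_elem)
    thus "y \<in> (\<lambda>(a,b). of_int a / of_int b) ` ({0..n} \<times> {1..n})"
      by (intro image_eqI[of _ _ "(a,b)"]) auto
  qed
  thus ?thesis by (rule finite_subset) auto
qed

lemma left_arg:
  fixes a b m n u v :: int
  assumes "0 < b" "b \<le> n" "a*n < m*b" "m*v - n*u = 1" "v \<ge> 1"
  shows "a*v \<le> b*u"
proof (rule ccontr)
  assume "\<not> a*v \<le> b*u"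
  hence h1: "a*v - b*u \<ge> 1" by simp
  have h2: "m*b - n*a \<ge> 1" using assms(3) by (simp add: ac_simps)
  have "b = b*(m*v - n*u)" using assms(4) by simp
  also have "\<dots> = v*(m*b - n*a) + n*(a*v - b*u)" by (simp add: algebra_simps)
  finally have e: "b = v*(m*b - n*a) + n*(a*v - b*u)" .
  have "v*(m*b - n*a) \<ge> v*1" using h2 assms(5) by (intro mult_left_mono) auto
  moreover have "n*(a*v - b*u) \<ge> n*1" using h1 assms by (intro mult_left_mono) auto
  ultimately show False using e assms by linarith
qed

lemma right_arg:
  fixes a b m n p q :: int
  assumes "0 < b" "b \<le> n" "m*b < a*n" "n*p - m*q = 1" "q \<ge> 1"
  shows "b*p \<le> a*q"
proof (rule ccontr)
  assume "\<not> b*p \<le> a*q"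
  hence h1: "b*p - a*q \<ge> 1" by simp
  have h2: "n*a - m*b \<ge> 1" using assms(3) by (simp add: ac_simps)
  have "b = b*(n*p - m*q)" using assms(4) by simp
  also have "\<dots> = q*(n*a - m*b) + n*(b*p - a*q)" by (simp add: algebra_simps)
  finally have e: "b = q*(n*a - m*b) + n*(b*p - a*q)" .
  have "q*(n*a - m*b) \<ge> q*1" using h2 assms(5) by (intro mult_left_mono) auto
  moreover have "n*(b*p - a*q) \<ge> n*1" using h1 assms by (intro mult_left_mono) auto
  ultimately show False using e assms by linarith
qed

lemma bezout_coprime:
  fixes a b x y :: int
  assumes "x*a - y*b = 1"
  shows "coprime a b"
proof (rule coprimeI)
  fix c assume "c dvd a" "c dvd b"
  hence "c dvd x*a - y*b" by simp
  thus "is_unit c" using assms by simp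
qed



lemma dm: fixes n a r :: nat assumes "r < n" shows "(n*a + r) div n = a" "(n*a + r) mod n = r"
  using assms by simp_all

lemma split_1m:
  fixes f :: "nat \<Rightarrow> nat" and m :: nat
  assumes "m \<ge> 1"
  shows "int (\<Sum>j<N. if f j \<in> {1..m} then 1 else 0) = int (\<Sum>j<N. if f j < m then 1 else 0)
     + int (\<Sum>j<N. if f j = m then 1 else 0) - int (\<Sum>j<N. if f j = 0 then 1 else 0)"
  using assms by (induction N) auto

lemma split_hi:
  fixes f :: "nat \<Rightarrow> nat" and m n :: nat
  assumes "\<And>j. f j < n"
  shows "(\<Sum>j<N. if f j \<in> {n-m..n-1} then 1 else 0) = (\<Sum>j<N. if f j \<ge> n - m then 1 else (0::nat))"
proof (rule sum.cong[OF refl])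
  fix j have "f j < n" by fact
  thus "(if f j \<in> {n-m..n-1} then 1 else 0) = (if f j \<ge> n - m then 1 else (0::nat))" by auto
qed

lemma arith_setup:
  fixes m n :: nat
  assumes "coprime m n" "0 < m" "2*m < n"
  obtains u0 v0 where "m*v0 = n*u0 + 1" "0 < v0" "v0 < n" "u0 < m"
proof -
  obtain x where "[m*x = Suc 0] (mod n)" using cong_solve_coprime_nat[OF assms(1)] by blast
  hence mx: "(m*x) mod n = 1" using assms by (simp add: cong_def)
  define v0 where "v0 = x mod n"
  have "(m*v0) mod n = 1" using mx unfolding v0_def by (simp add: mod_mult_right_eq)
  hence e: "m*v0 = n*((m*v0) div n) + 1" by (metis div_mult_mod_eq add.commute mult.commute)
  have "v0 < n" using assms unfolding v0_def by simp
  moreover have "0 < v0" using e by (cases v0) auto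
  moreover have "(m*v0) div n < m"
  proof -
    have "n*((m*v0) div n) < m*v0" using e by linarith
    also have "\<dots> \<le> m*n" using \<open>v0 < n\<close> by simp
    finally show ?thesis by (simp add: mult.commute)
  qed
  ultimately show ?thesis using that e by blast
qed


theorem lemma1p11:
  fixes m n :: nat and u v p q :: int
  assumes "coprime m n" and "0 < m" and "2 * m < n"
    and "quotient_of (LFP (of_nat m / of_nat n)) = (u, v)"
    and "quotient_of (RFP (of_nat m / of_nat n)) = (p, q)"
  shows "int (card (orbit m n m (n - 1))) = q \<and> q = int n - v
       \<and> int (card (orbit m n (m - 1) 0)) = int n - q \<and> int n - q = v
       \<and> int (card (orbit m n m (n - 1) \<inter> {1..m})) = p
       \<and> int (card (orbit m n m (n - 1) \<inter> {n - m..n - 1})) = p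
       \<and> p = int m - u
       \<and> int (card (orbit m n (m - 1) 0 \<inter> {1..m})) = int m - p
       \<and> int (card (orbit m n (m - 1) 0 \<inter> {n - m..n - 1})) = int m - p
       \<and> int m - p = u"
proof -
  obtain u0 v0 where E1: "m*v0 = n*u0 + 1" and v0: "0 < v0" "v0 < n" and u0: "u0 < m"
    using arith_setup[OF assms(1-3)] by blast
  define q0 where "q0 = n - v0"
  define p0 where "p0 = m - u0"
  have E1i: "int m * int v0 = int n * int u0 + 1" using E1 by (metis of_nat_mult of_nat_add of_nat_1)
  have E2i: "int n * int p0 = int m * int q0 + 1"
    using E1i u0 v0 unfolding p0_def q0_def by (simp add: of_nat_diff algebra_simps)
  have E2: "n*p0 = m*q0 + 1" using E2i by (metis of_nat_mult of_nat_add of_nat_1 of_nat_eq_iff)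
  have q0: "1 \<le> q0" "q0 < n" using v0 unfolding q0_def by auto
  have p0: "1 \<le> p0" "p0 \<le> m" using u0 unfolding p0_def by auto
  have n2: "2 \<le> n" "m < n" using assms by auto
  define X :: rat where "X = of_nat m / of_nat n"
  have X: "X = of_int (int m) / of_int (int n)" unfolding X_def by simp
  have cmn: "coprime (int m) (int n)" using assms(1) by simp
  have qX: "quotient_of X = (int m, int n)" using quot_eq[OF _ cmn] n2 X by simp
  have sX: "snd (quotient_of X) = int n" using qX by simp
  define y0 :: rat where "y0 = of_int (int u0) / of_int (int v0)"
  have cuv: "coprime (int u0) (int v0)"
    by (rule bezout_coprime[of "- int n" _ "- int m"]) (use E1i in \<open>simp add: algebra_simps\<close>)
  have qy0: "quotient_of y0 = (int u0, int v0)" unfolding y0_def using quot_eq[OF _ cuv] v0 by simp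
  have y0X: "y0 < X" unfolding y0_def X using rat_less_iff[of "int v0" "int n" "int u0" "int m"] v0 n2 E1i
    by (simp add: algebra_simps)
  have "n*(2*u0) < n * v0"
  proof -
    have "n*(2*u0) = 2*(n*u0)" by simp
    also have "\<dots> < 2*(m*v0)" using E1 by simp
    also have "\<dots> = (2*m)*v0" by simp
    also have "\<dots> \<le> n*v0" using assms(3) by (intro mult_right_mono) auto
    finally show ?thesis .
  qed
  hence "2*u0 < v0" by simp
  hence "y0 \<le> 1/2" unfolding y0_def using rat_le_iff[of "int v0" 2 "int u0" 1] v0 by simp
  hence y0F: "y0 \<in> farey (int n)" unfolding farey_def using qy0 v0 unfolding y0_def by auto
  have "LFP X = y0"
    unfolding LFP_def sX
  proof (rule Max_eqI)
    show "finite {y \<in> farey (int n). y < X}" using farey_finite by simp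
    show "y0 \<in> {y \<in> farey (int n). y < X}" using y0F y0X by simp
    fix y assume "y \<in> {y \<in> farey (int n). y < X}"
    hence yF: "y \<in> farey (int n)" and yX: "y < X" by auto
    obtain a b where ab: "y = of_int a / of_int b" "0 < b" "b \<le> int n"
      using farey_elem[OF yF] by metis
    have "a * int n < int m * b" using yX ab(1,2) X rat_less_iff[of b "int n" a "int m"] n2 by simp
    hence "a * int v0 \<le> b * int u0"
      using left_arg[of b "int n" a "int m" "int v0" "int u0"] ab E1i v0 by (simp add: algebra_simps)
    thus "y \<le> y0" unfolding y0_def ab(1) using rat_le_iff[of b "int v0" a "int u0"] ab(2) v0
      by (simp add: algebra_simps)
  qed
  hence uv: "u = int u0" "v = int v0" using assms(4) qy0 X_def by auto
  define z0 :: rat where "z0 = of_int (int p0) / of_int (int q0)"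
  have cpq: "coprime (int p0) (int q0)"
    by (rule bezout_coprime[of "int n" _ "int m"]) (use E2i in \<open>simp add: algebra_simps\<close>)
  have qz0: "quotient_of z0 = (int p0, int q0)" unfolding z0_def using quot_eq[OF _ cpq] q0 by simp
  have Xz0: "X < z0" unfolding z0_def X using rat_less_iff[of "int n" "int q0" "int m" "int p0"] q0 n2 E2i
    by (simp add: algebra_simps)
  have "2 * int p0 \<le> 1 * int q0"
    by (rule right_arg[of 2 "int n" "int m" 1]) (use n2 E2i q0 assms(3) in \<open>auto simp: algebra_simps\<close>)
  hence "z0 \<le> 1/2" unfolding z0_def using rat_le_iff[of "int q0" 2 "int p0" 1] q0 by simp
  hence z0F: "z0 \<in> farey (int n)" unfolding farey_def using qz0 q0 unfolding z0_def by auto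
  have "RFP X = z0"
    unfolding RFP_def sX
  proof (rule Min_eqI)
    show "finite {y \<in> farey (int n). X < y}" using farey_finite by simp
    show "z0 \<in> {y \<in> farey (int n). X < y}" using z0F Xz0 by simp
    fix y assume "y \<in> {y \<in> farey (int n). X < y}"
    hence yF: "y \<in> farey (int n)" and yX: "X < y" by auto
    obtain a b where ab: "y = of_int a / of_int b" "0 < b" "b \<le> int n"
      using farey_elem[OF yF] by metis
    have "int m * b < a * int n" using yX ab(1,2) X rat_less_iff[of "int n" b "int m" a] n2 by simp
    hence "b * int p0 \<le> a * int q0"
      using right_arg[of b "int n" "int m" a "int p0" "int q0"] ab E2i q0 by (simp add: algebra_simps)
    thus "z0 \<le> y" unfolding z0_def ab(1) using rat_le_iff[of "int q0" b "int p0" a] ab(2) q0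
      by (simp add: algebra_simps)
  qed
  hence pq: "p = int p0" "q = int q0" using assms(5) qz0 X_def by auto
  define f1 where "f1 = (\<lambda>j. (m + j*m) mod n)"
  define f2 where "f2 = (\<lambda>j. (m - 1 + j*m) mod n)"
  have inj1: "inj_on f1 {..<n}" unfolding f1_def by (rule orb_inj_on[OF assms(1)])
  have inj2: "inj_on f2 {..<n}" unfolding f2_def by (rule orb_inj_on[OF assms(1)])
  have inj1': "inj_on f1 {..<q0}" using q0 by (intro inj_on_subset[OF inj1]) auto
  have inj2': "inj_on f2 {..<v0}" using v0 by (intro inj_on_subset[OF inj2]) auto
  have k1: "m + (q0 - 1)*m = n*(p0 - 1) + (n - 1)"
  proof -
    have "m + (q0 - 1)*m = q0*m" using q0 by (cases q0) auto
    moreover have "n*(p0 - 1) + (n - 1) + 1 = n*p0" using p0 n2 by (cases p0) auto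
    ultimately show ?thesis using E2 by (simp add: mult.commute)
  qed
  have k2: "m - 1 + (v0 - 1)*m = n*u0 + 0"
  proof -
    have "m - 1 + (v0 - 1)*m + 1 = v0*m" using v0 assms(2) by (cases v0) auto
    thus ?thesis using E1 by (simp add: mult.commute)
  qed
  have k3: "m + q0*m = n*p0 + (m - 1)" using E2 assms(2) by (simp add: mult.commute)
  have k4: "m - 1 + v0*m = n*u0 + m" using E1 assms(2) by (simp add: mult.commute)
  have O1: "orbit m n m (n - 1) = f1 ` {..<q0}"
    using orbit_eq[OF assms(1), of "q0 - 1" m "n - 1"] q0 k1 dm[of "n - 1" n] n2 unfolding f1_def by simp
  have O2: "orbit m n (m - 1) 0 = f2 ` {..<v0}"
    using orbit_eq[OF assms(1), of "v0 - 1" "m - 1" 0] v0 k2 dm[of 0 n] n2 unfolding f2_def by simp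
  have c1: "card (orbit m n m (n - 1)) = q0" using O1 inj1' by (simp add: card_image)
  have c2: "card (orbit m n (m - 1) 0) = v0" using O2 inj2' by (simp add: card_image)
  have f1lt: "\<And>j. f1 j < n" and f2lt: "\<And>j. f2 j < n" using n2 unfolding f1_def f2_def by auto
  have b2: "card (orbit m n m (n - 1) \<inter> {n - m..n - 1}) = p0"
  proof -
    have "card (orbit m n m (n - 1) \<inter> {n - m..n - 1}) = (\<Sum>j<q0. if f1 j \<ge> n - m then 1 else 0)"
      using O1 card_inter_sum[OF inj1'] split_hi[OF f1lt] by simp
    also have "\<dots> = (m + q0*m) div n - m div n" unfolding f1_def by (rule wraps) (use n2 in simp)
    also have "\<dots> = p0" using k3 dm[of "m - 1" n] n2 by simp
    finally show ?thesis .
  qed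
  have c2': "card (orbit m n (m - 1) 0 \<inter> {n - m..n - 1}) = u0"
  proof -
    have "card (orbit m n (m - 1) 0 \<inter> {n - m..n - 1}) = (\<Sum>j<v0. if f2 j \<ge> n - m then 1 else 0)"
      using O2 card_inter_sum[OF inj2'] split_hi[OF f2lt] by simp
    also have "\<dots> = (m - 1 + v0*m) div n - (m - 1) div n" unfolding f2_def by (rule wraps) (use n2 in simp)
    also have "\<dots> = u0" using k4 dm[of m n] n2 by simp
    finally show ?thesis .
  qed
  have b1: "int (card (orbit m n m (n - 1) \<inter> {1..m})) = int p0"
  proof -
    have C: "card (orbit m n m (n - 1) \<inter> {1..m}) = (\<Sum>j<q0. if f1 j \<in> {1..m} then 1 else 0)"
      unfolding O1 by (rule card_inter_sum[OF inj1'])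
    have S: "int (\<Sum>j<q0. if f1 j \<in> {1..m} then 1 else 0) = int (\<Sum>j<q0. if f1 j < m then 1 else 0)
     + int (\<Sum>j<q0. if f1 j = m then 1 else 0) - int (\<Sum>j<q0. if f1 j = 0 then 1 else 0)"
      by (rule split_1m) (use assms(2) in simp)
    have "int (card (orbit m n m (n - 1) \<inter> {1..m})) = int (\<Sum>j<q0. if f1 j < m then 1 else 0)
     + int (\<Sum>j<q0. if f1 j = m then 1 else 0) - int (\<Sum>j<q0. if f1 j = 0 then 1 else 0)"
      unfolding C by (rule S)
    moreover have "(\<Sum>j<q0. if f1 j < m then 1 else 0) = p0 - 1"
    proof -
      have "(\<Sum>j<Suc (q0 - 1). if f1 j < m then 1 else 0) = (if m mod n < m then 1 else 0) + ((m + (q0 - 1)*m) div n - m div n)"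
        unfolding f1_def by (rule lows) (use n2 in simp)
      thus ?thesis using q0 k1 dm[of "n - 1" n] n2 by simp
    qed
    moreover have "(\<Sum>j<q0. if f1 j = m then 1 else 0) = (1::nat)"
    proof -
      have "f1 0 = m" unfolding f1_def using n2 by simp
      thus ?thesis using count_eq[OF inj1, of q0 0] q0 by simp
    qed
    moreover have "(\<Sum>j<q0. if f1 j = 0 then 1 else 0) = (0::nat)"
    proof -
      have "m + (n - 1)*m = n*m" using n2 by (cases n) auto
      hence "f1 (n - 1) = (n*m) mod n" unfolding f1_def by simp
      hence "f1 (n - 1) = 0" by simp
      moreover have "\<not> n - 1 < q0" using v0 unfolding q0_def by simp
      ultimately show ?thesis using count_eq[OF inj1, of q0 "n - 1"] q0 n2 by simp
    qed
    moreover have "int (p0 - 1) = int p0 - 1" using p0 by simp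
    ultimately show ?thesis by linarith
  qed
  have c1': "int (card (orbit m n (m - 1) 0 \<inter> {1..m})) = int u0"
  proof -
    have C: "card (orbit m n (m - 1) 0 \<inter> {1..m}) = (\<Sum>j<v0. if f2 j \<in> {1..m} then 1 else 0)"
      unfolding O2 by (rule card_inter_sum[OF inj2'])
    have S: "int (\<Sum>j<v0. if f2 j \<in> {1..m} then 1 else 0) = int (\<Sum>j<v0. if f2 j < m then 1 else 0)
     + int (\<Sum>j<v0. if f2 j = m then 1 else 0) - int (\<Sum>j<v0. if f2 j = 0 then 1 else 0)"
      by (rule split_1m) (use assms(2) in simp)
    have "int (card (orbit m n (m - 1) 0 \<inter> {1..m})) = int (\<Sum>j<v0. if f2 j < m then 1 else 0)
     + int (\<Sum>j<v0. if f2 j = m then 1 else 0) - int (\<Sum>j<v0. if f2 j = 0 then 1 else 0)"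
      unfolding C by (rule S)
    moreover have "(\<Sum>j<v0. if f2 j < m then 1 else 0) = u0 + 1"
    proof -
      have "(\<Sum>j<Suc (v0 - 1). if f2 j < m then 1 else 0) = (if (m - 1) mod n < m then 1 else 0) + ((m - 1 + (v0 - 1)*m) div n - (m - 1) div n)"
        unfolding f2_def by (rule lows) (use n2 in simp)
      moreover have "Suc (v0 - 1) = v0" using v0 by simp
      moreover have "(m - 1) mod n = m - 1" "(m - 1) div n = 0" using n2 by simp_all
      moreover have "(m - 1 + (v0 - 1)*m) div n = u0"
      proof -
        have "(m - 1 + (v0 - 1)*m) div n = (n*u0 + 0) div n" by (simp only: k2)
        also have "\<dots> = u0" using dm(1)[of 0 n u0] n2 by linarith
        finally show ?thesis .
      qed
      moreover have "m - 1 < m" using assms(2) by simp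
      ultimately show ?thesis by simp
    qed
    moreover have "(\<Sum>j<v0. if f2 j = m then 1 else 0) = (0::nat)"
    proof -
      have "f2 v0 = (n*u0 + m) mod n" unfolding f2_def by (simp only: k4)
      hence "f2 v0 = m" using dm(2)[of m n u0] n2 by simp
      thus ?thesis using count_eq[OF inj2, of v0 v0] v0 by simp
    qed
    moreover have "(\<Sum>j<v0. if f2 j = 0 then 1 else 0) = (1::nat)"
    proof -
      have "f2 (v0 - 1) = (n*u0 + 0) mod n" unfolding f2_def by (simp only: k2)
      hence "f2 (v0 - 1) = 0" by simp
      thus ?thesis using count_eq[OF inj2, of v0 "v0 - 1"] v0 by simp
    qed
    ultimately show ?thesis by linarith
  qed
  have Q: "int q0 = int n - int v0" using v0 unfolding q0_def by (simp add: of_nat_diff)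
  have P: "int p0 = int m - int u0" using u0 unfolding p0_def by (simp add: of_nat_diff)
  have F: "int (card (orbit m n m (n - 1))) = int q0" "int (card (orbit m n (m - 1) 0)) = int v0"
    "int (card (orbit m n m (n - 1) \<inter> {n - m..n - 1})) = int p0"
    "int (card (orbit m n (m - 1) 0 \<inter> {n - m..n - 1})) = int u0"
    using c1 c2 b2 c2' by simp_all
  show ?thesis
    using F b1 c1' uv pq Q P by (intro conjI; linarith)
qed

end
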